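(* Let $v\in A$ be a monic irreducible polynomial of degree $d$, and let $\lambda$ (an element of the algebraic closure of $\mathbb{F}_q$ in $\mathbb{C}_\infty$) be a root of $v$, viewed as a polynomial in $\theta$ over $\mathbb{F}_q$. Then \[(-1)^d v=\prod_{i=1}^d \omega(\lambda^{q^i})^{q-1}.\]
   Context: $A=\mathbb{F}_q[\theta]$; $\mathbb{C}_\infty$ the completion of an algebraic closure of the completion of $\mathbb{F}_q(\theta)$ for $|\theta|=q$. Fix $\iota\in\mathbb{C}_\infty$ with $\iota^{q-1}=-\theta$; $\omega(t)=\iota\prod_{j\ge0}(1-t/\theta^{q^j})^{-1}$, a power series in $t$ converging for $|t|\le1$ (so it can be evaluated at $\lambda$, which satisfies $|\lambda|=1$). *)

theory Defs
  imports "HOL-Computational_Algebra.Polynomial"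
begin

text \<open>Abstract description of the ambient field C_infinity: a field with a
non-archimedean absolute value, complete and algebraically closed.\<close>

definition nonarch_abs :: "('a::field \<Rightarrow> real) \<Rightarrow> bool" where
  "nonarch_abs N \<longleftrightarrow> (\<forall>x. N x \<ge> 0) \<and> (\<forall>x. N x = 0 \<longleftrightarrow> x = 0) \<and>
     (\<forall>x y. N (x * y) = N x * N y) \<and> (\<forall>x y. N (x + y) \<le> max (N x) (N y))"

definition conv_wrt :: "('a::field \<Rightarrow> real) \<Rightarrow> (nat \<Rightarrow> 'a) \<Rightarrow> 'a \<Rightarrow> bool" where
  "conv_wrt N f L \<longleftrightarrow> (\<forall>\<epsilon>>0. \<exists>M. \<forall>n\<ge>M. N (f n - L) < \<epsilon>)"

definition complete_wrt :: "('a::field \<Rightarrow> real) \<Rightarrow> bool" where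
  "complete_wrt N \<longleftrightarrow> (\<forall>f. (\<forall>\<epsilon>>0. \<exists>M. \<forall>m\<ge>M. \<forall>n\<ge>M. N (f m - f n) < \<epsilon>)
        \<longrightarrow> (\<exists>L. conv_wrt N f L))"

definition alg_closed :: "'a::field itself \<Rightarrow> bool" where
  "alg_closed _ \<longleftrightarrow> (\<forall>P::'a poly. degree P \<ge> 1 \<longrightarrow> (\<exists>x. poly P x = 0))"

text \<open>The copy of F_q inside the field: the roots of X^q - X.\<close>
definition Fq :: "nat \<Rightarrow> 'a::field set" where
  "Fq q = {x. x ^ q = x}"

definition irreducible_over :: "'a::field set \<Rightarrow> 'a poly \<Rightarrow> bool" where
  "irreducible_over F P \<longleftrightarrow> (\<forall>i. coeff P i \<in> F) \<and> degree P \<ge> 1 \<and>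
     (\<forall>a b. (\<forall>i. coeff a i \<in> F) \<longrightarrow> (\<forall>i. coeff b i \<in> F) \<longrightarrow> P = a * b
        \<longrightarrow> degree a = 0 \<or> degree b = 0)"

definition omega :: "('a::field \<Rightarrow> real) \<Rightarrow> nat \<Rightarrow> 'a \<Rightarrow> 'a \<Rightarrow> 'a \<Rightarrow> 'a" where
  "omega N q \<theta> \<iota> t =
     \<iota> * (THE L. conv_wrt N (\<lambda>n. \<Prod>j<n. inverse (1 - t / \<theta> ^ (q ^ j))) L)"

end

theory Submission
  imports Defs "HOL-Computational_Algebra.Primes"
begin


context
  fixes N :: "'a::field \<Rightarrow> real"
  assumes na: "nonarch_abs N"
begin

lemma na_ge0: "N x \<ge> 0" using na unfolding nonarch_abs_def by blast
lemma na_eq0: "N x = 0 \<longleftrightarrow> x = 0" using na unfolding nonarch_abs_def by blast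
lemma na_mult: "N (x * y) = N x * N y" using na unfolding nonarch_abs_def by blast
lemma na_add: "N (x + y) \<le> max (N x) (N y)" using na unfolding nonarch_abs_def by blast

lemma na_0: "N 0 = 0" using na_eq0 by simp

lemma na_1: "N 1 = 1"
proof -
  have "N 1 = N 1 * N 1" using na_mult[of 1 1] by simp
  moreover have "N 1 \<noteq> 0" using na_eq0 by simp
  ultimately show ?thesis by simp
qed

lemma na_minus: "N (- x) = N x"
proof -
  have "N (-1) * N (-1) = 1" using na_mult[of "-1" "-1"] na_1 by simp
  moreover have "N (-1) \<ge> 0" by (rule na_ge0)
  ultimately have "N (-1) = 1"
    by (metis abs_of_nonneg abs_one power2_eq_square real_sqrt_abs real_sqrt_one)
  thus ?thesis using na_mult[of "-1" x] by simp
qed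

lemma na_diff: "N (x - y) \<le> max (N x) (N y)"
  using na_add[of x "-y"] na_minus[of y] by simp

lemma na_diff_commute: "N (x - y) = N (y - x)"
  using na_minus[of "x - y"] by simp

lemma na_power: "N (x ^ n) = N x ^ n"
  by (induction n) (auto simp: na_1 na_mult)

lemma na_inverse: "N (inverse x) = inverse (N x)"
proof (cases "x = 0")
  case True then show ?thesis using na_0 by simp
next
  case False
  have "N x * N (inverse x) = 1" using na_mult[of x "inverse x"] False na_1 by simp
  thus ?thesis by (simp add: inverse_unique)
qed

lemma na_divide: "N (x / y) = N x / N y"
  by (simp add: divide_inverse na_mult na_inverse)

lemma na_ultra_eq: assumes "N y < N x" shows "N (x + y) = N x"
proof -
  have a: "N (x + y) \<le> N x" using na_add[of x y] assms by simp
  have "N x \<le> max (N (x + y)) (N (-y))" using na_add[of "x+y" "-y"] by simp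
  hence "N x \<le> N (x + y)" using assms na_minus[of y] by (auto simp: max_def split: if_splits)
  with a show ?thesis by simp
qed

lemma na_one_minus: assumes "N s < 1" shows "N (1 - s) = 1"
  using na_ultra_eq[of "-s" 1] assms na_1 na_minus[of s] by simp

lemma conv_unique: assumes "conv_wrt N f a" "conv_wrt N f b" shows "a = b"
proof (rule ccontr)
  assume "a \<noteq> b"
  hence e: "N (a - b) > 0" using na_eq0 na_ge0 by (metis eq_iff_diff_eq_0 less_eq_real_def)
  obtain M1 where M1: "\<forall>n\<ge>M1. N (f n - a) < N (a - b)" using assms(1) e unfolding conv_wrt_def by blast
  obtain M2 where M2: "\<forall>n\<ge>M2. N (f n - b) < N (a - b)" using assms(2) e unfolding conv_wrt_def by blast
  let ?n = "max M1 M2"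
  have "a - b = (f ?n - b) - (f ?n - a)" by simp
  hence "N (a - b) \<le> max (N (f ?n - b)) (N (f ?n - a))" using na_diff by metis
  moreover have "N (f ?n - a) < N (a - b)" "N (f ?n - b) < N (a - b)" using M1 M2 by auto
  ultimately show False by simp
qed

lemma conv_const: "conv_wrt N (\<lambda>n. c) c"
  unfolding conv_wrt_def using na_0 by simp

lemma conv_mult: assumes "conv_wrt N f a" "conv_wrt N g b"
  shows "conv_wrt N (\<lambda>n. f n * g n) (a * b)"
  unfolding conv_wrt_def
proof (intro allI impI)
  fix \<epsilon> :: real assume e: "\<epsilon> > 0"
  define K where "K = max 1 (N a)"
  define K' where "K' = max 1 (N b)"
  have K: "K > 0" "K' > 0" unfolding K_def K'_def by auto
  have d: "min 1 (\<epsilon> / K') > 0" using e K by simp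
  obtain M1 where M1: "\<forall>n\<ge>M1. N (f n - a) < min 1 (\<epsilon> / K')"
    using assms(1) d unfolding conv_wrt_def by blast
  obtain M2 where M2: "\<forall>n\<ge>M2. N (g n - b) < \<epsilon> / K"
    using assms(2) e K unfolding conv_wrt_def by (meson divide_pos_pos)
  show "\<exists>M. \<forall>n\<ge>M. N (f n * g n - a * b) < \<epsilon>"
  proof (intro exI allI impI)
    fix n assume n: "max M1 M2 \<le> n"
    have fa: "N (f n - a) < 1" "N (f n - a) < \<epsilon> / K'" using M1 n by auto
    have gb: "N (g n - b) < \<epsilon> / K" using M2 n by auto
    have "N (f n) \<le> max (N (f n - a)) (N a)" using na_add[of "f n - a" a] by simp
    hence Nf: "N (f n) \<le> K" using fa unfolding K_def by auto
    have eq: "f n * g n - a * b = f n * (g n - b) + (f n - a) * b" by (simp add: algebra_simps)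
    have t1: "N (f n * (g n - b)) < \<epsilon>"
    proof -
      have "N (f n * (g n - b)) = N (f n) * N (g n - b)" by (simp add: na_mult)
      also have "\<dots> \<le> K * N (g n - b)" using Nf na_ge0 by (simp add: mult_right_mono)
      also have "\<dots> < K * (\<epsilon> / K)" using gb K by (simp add: pos_less_divide_eq mult.commute)
      finally show ?thesis using K by simp
    qed
    have t2: "N ((f n - a) * b) < \<epsilon>"
    proof -
      have "N ((f n - a) * b) = N (f n - a) * N b" by (simp add: na_mult)
      also have "\<dots> \<le> N (f n - a) * K'" using na_ge0 unfolding K'_def by (simp add: mult_left_mono)
      also have "\<dots> < (\<epsilon> / K') * K'" using fa K by (simp add: pos_less_divide_eq)
      finally show ?thesis using K by simp
    qed
    show "N (f n * g n - a * b) < \<epsilon>" using na_add[of "f n * (g n - b)" "(f n - a) * b"] t1 t2 eq by simp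
  qed
qed

lemma conv_prod: assumes "finite A" "\<forall>i\<in>A. conv_wrt N (f i) (L i)"
  shows "conv_wrt N (\<lambda>n. \<Prod>i\<in>A. f i n) (\<Prod>i\<in>A. L i)"
  using assms
proof (induction A rule: finite_induct)
  case empty then show ?case using conv_const by simp
next
  case (insert x F)
  then show ?case using conv_mult[of "f x" "L x" "\<lambda>n. \<Prod>i\<in>F. f i n"] by simp
qed

lemma conv_power: assumes "conv_wrt N f a" shows "conv_wrt N (\<lambda>n. f n ^ k) (a ^ k)"
  by (induction k) (auto simp: conv_const conv_mult assms)

lemma half_pow_small: assumes "(\<epsilon>::real) > 0" shows "\<exists>M. (1/2::real) ^ M < \<epsilon>"
  using real_arch_pow_inv[of \<epsilon> "1/2"] assms by simp

lemma prod_conv_exists: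
  assumes cpl: "complete_wrt N" and s: "\<forall>j. N (s j) \<le> (1/2) ^ Suc j"
  shows "\<exists>L. conv_wrt N (\<lambda>n. \<Prod>j<n. inverse (1 - s j)) L"
proof -
  define P where "P n = (\<Prod>j<n. inverse (1 - s j))" for n
  have s1: "N (s j) < 1" for j
  proof -
    have "(1/2::real) ^ Suc j \<le> 1/2" by (simp add: power_le_one)
    thus ?thesis using s[rule_format, of j] by linarith
  qed
  have NP: "N (P n) = 1" for n
    by (induction n) (simp_all add: P_def na_1 na_mult na_inverse na_one_minus[OF s1])
  have D: "N (P (Suc n) - P n) \<le> (1/2) ^ Suc n" for n
  proof -
    have ne: "1 - s n \<noteq> 0" using na_one_minus[OF s1[of n]] na_0 by auto
    have "P (Suc n) - P n = P n * (s n / (1 - s n))"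
      unfolding P_def using ne by (simp add: field_simps)
    hence "N (P (Suc n) - P n) = N (s n)"
      by (simp add: na_mult na_divide NP na_one_minus[OF s1])
    thus ?thesis using s by simp
  qed
  have C: "N (P m - P n) \<le> (1/2) ^ Suc n" if "n \<le> m" for m n
    using that
  proof (induction m rule: dec_induct)
    case base then show ?case by (simp add: na_0)
  next
    case (step m)
    have "P (Suc m) - P n = (P (Suc m) - P m) + (P m - P n)" by simp
    hence "N (P (Suc m) - P n) \<le> max (N (P (Suc m) - P m)) (N (P m - P n))" using na_add by metis
    moreover have "(1/2::real) ^ Suc m \<le> (1/2) ^ Suc n" using step(1) by (simp add: power_decreasing)
    moreover note D[of m] step(3)
    ultimately show ?case by (smt (verit, ccfv_SIG))
  qed
  have "\<forall>\<epsilon>>0. \<exists>M. \<forall>m\<ge>M. \<forall>n\<ge>M. N (P m - P n) < \<epsilon>"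
  proof (intro allI impI)
    fix \<epsilon> :: real assume e: "\<epsilon> > 0"
    obtain M where M: "(1/2::real) ^ M < \<epsilon>" using half_pow_small[OF e] by blast
    show "\<exists>M. \<forall>m\<ge>M. \<forall>n\<ge>M. N (P m - P n) < \<epsilon>"
    proof (intro exI allI impI)
      fix m n assume mn: "M \<le> m" "M \<le> n"
      have b: "(1/2::real) ^ Suc k \<le> (1/2) ^ M" if "M \<le> k" for k
      proof -
        have "(1/2::real) ^ Suc k \<le> (1/2) ^ k" by (simp add: power_decreasing)
        also have "\<dots> \<le> (1/2) ^ M" using that by (simp add: power_decreasing)
        finally show ?thesis .
      qed
      show "N (P m - P n) < \<epsilon>"
      proof (cases "n \<le> m")
        case True then show ?thesis using C[OF True] b[OF mn(2)] M by linarith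
      next
        case False
        hence mn': "m \<le> n" by simp
        show ?thesis using C[OF mn'] b[OF mn(1)] M na_diff_commute[of "P m" "P n"] by linarith
      qed
    qed
  qed
  then obtain L where "conv_wrt N P L" using cpl unfolding complete_wrt_def by blast
  then show ?thesis unfolding P_def by blast
qed

lemma prod_near_one:
  assumes "finite S" "\<forall>i\<in>S. N (s i) \<le> r" "0 \<le> r" "r \<le> 1"
  shows "N ((\<Prod>i\<in>S. (1 - s i)) - 1) \<le> r"
  using assms(1,2)
proof (induction S rule: finite_induct)
  case empty then show ?case using assms by (simp add: na_0)
next
  case (insert x F)
  define P where "P = (\<Prod>i\<in>F. (1 - s i))"
  have IH: "N (P - 1) \<le> r" using insert P_def by simp
  have "N P \<le> max (N (P - 1)) (N 1)" using na_add[of "P - 1" 1] by simp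
  hence NP: "N P \<le> 1" using IH assms na_1 by simp
  have "(1 - s x) * P - 1 = (P - 1) + (- (s x * P))" by (simp add: algebra_simps)
  hence "N ((1 - s x) * P - 1) \<le> max (N (P - 1)) (N (s x * P))" using na_add na_minus by metis
  moreover have "N (s x * P) \<le> r"
  proof -
    have "N (s x * P) = N (s x) * N P" by (simp add: na_mult)
    also have "\<dots> \<le> r * 1" using insert(4) NP na_ge0 assms(3) by (intro mult_mono) auto
    finally show ?thesis by simp
  qed
  ultimately show ?case using IH insert(1,2) unfolding P_def by (simp add: prod.insert)
qed

end


lemma prod_lin_dvd:
  fixes v :: "'a::field poly"
  assumes "finite B" "\<forall>x\<in>B. poly v x = 0"
  shows "(\<Prod>x\<in>B. [:-x, 1:]) dvd v"
  using assms
proof (induction B rule: finite_induct)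
  case empty then show ?case by simp
next
  case (insert x S)
  then obtain w where w: "v = (\<Prod>y\<in>S. [:-y, 1:]) * w" by (auto elim: dvdE)
  have "poly (\<Prod>y\<in>S. [:-y, 1:]) x \<noteq> 0" using insert(1,2) by (simp add: poly_prod)
  moreover have "poly v x = 0" using insert by simp
  ultimately have "poly w x = 0" using w by simp
  then obtain u where u: "w = [:-x, 1:] * u" using poly_eq_0_iff_dvd by (metis dvdE)
  have "v = ([:-x, 1:] * (\<Prod>y\<in>S. [:-y, 1:])) * u" using w u by (simp only: mult_ac)
  hence "([:-x, 1:] * (\<Prod>y\<in>S. [:-y, 1:])) dvd v" by (rule dvdI)
  moreover have "(\<Prod>y\<in>insert x S. [:-y, 1:]) = [:-x, 1:] * (\<Prod>y\<in>S. [:-y, 1:])"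
    using insert(1,2) by (rule prod.insert)
  ultimately show ?case by simp
qed

context
  fixes q e :: nat
  assumes pc: "prime CHAR('a::field)" and qd: "q = CHAR('a) ^ e" and e1: "e \<ge> 1"
begin

lemma q_ge2: "q \<ge> 2"
proof -
  have "CHAR('a) \<ge> 2" using pc prime_ge_2_nat by blast
  hence "CHAR('a) ^ 1 \<le> CHAR('a) ^ e" using e1 by (intro power_increasing) auto
  thus ?thesis using qd \<open>CHAR('a) \<ge> 2\<close> by simp
qed

lemma qk_eq: "q ^ k = CHAR('a) ^ (e * k)"
  by (simp add: qd power_mult)

lemma frob_add: "(x + y :: 'a) ^ (q ^ k) = x ^ (q ^ k) + y ^ (q ^ k)"
  using freshmans_dream'[OF pc qk_eq] .

lemma frob_sum: "(sum f A :: 'a) ^ (q ^ k) = (\<Sum>i\<in>A. f i ^ (q ^ k))"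
  using freshmans_dream_sum'[OF pc qk_eq] .

lemma qk_pos: "q ^ k > 0" using q_ge2 by simp

lemma frob_neg: "(- x :: 'a) ^ (q ^ k) = - (x ^ (q ^ k))"
proof -
  have "(0::'a) ^ (q ^ k) = 0" using qk_pos[of k] by (simp add: power_0_left)
  hence "(x + - x) ^ (q ^ k) = 0" by simp
  hence "x ^ (q ^ k) + (-x) ^ (q ^ k) = 0" using frob_add[of x "-x" k] by metis
  thus ?thesis by (simp add: eq_neg_iff_add_eq_0 add.commute)
qed

lemma frob_diff: "(x - y :: 'a) ^ (q ^ k) = x ^ (q ^ k) - y ^ (q ^ k)"
  using frob_add[of x "-y" k] frob_neg[of y k] by simp

lemma frob_inj: assumes "(x::'a) ^ q = y ^ q" shows "x = y"
proof -
  have "(x - y) ^ (q ^ 1) = 0" using frob_diff[of x y 1] assms by simp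
  thus ?thesis by simp
qed

lemma F0: "(0::'a) ^ q = 0" using qk_pos[of 1] by simp

lemma frob_sum1: "(sum f A :: 'a) ^ q = (\<Sum>i\<in>A. f i ^ q)"
  using frob_sum[of f A 1] by simp

lemma mapF_mult: "map_poly (\<lambda>x. x ^ q) (a * b :: 'a poly) = map_poly (\<lambda>x. x ^ q) a * map_poly (\<lambda>x. x ^ q) b"
proof (rule poly_eqI)
  fix n
  have "coeff (map_poly (\<lambda>x. x ^ q) (a * b)) n = (\<Sum>i\<le>n. coeff a i * coeff b (n-i)) ^ q"
    by (simp only: coeff_map_poly[of "\<lambda>x. x ^ q", OF F0] coeff_mult)
  also have "\<dots> = (\<Sum>i\<le>n. (coeff a i) ^ q * (coeff b (n-i)) ^ q)"
    by (simp only: frob_sum1 power_mult_distrib)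
  also have "\<dots> = coeff (map_poly (\<lambda>x. x ^ q) a * map_poly (\<lambda>x. x ^ q) b) n"
    by (simp only: coeff_map_poly[of "\<lambda>x. x ^ q", OF F0] coeff_mult)
  finally show "coeff (map_poly (\<lambda>x. x ^ q) (a * b)) n = coeff (map_poly (\<lambda>x. x ^ q) a * map_poly (\<lambda>x. x ^ q) b) n" .
qed

lemma mapF_prod: "map_poly (\<lambda>x. x ^ q) (\<Prod>i\<in>A. f i :: 'a poly) = (\<Prod>i\<in>A. map_poly (\<lambda>x. x ^ q) (f i))"
  by (induction A rule: infinite_finite_induct) (auto simp: mapF_mult)

lemma mapF_lin: "map_poly (\<lambda>x. x ^ q) [:-(x::'a), 1:] = [:-(x ^ q), 1:]"
  using frob_neg[of x 1] by (simp add: map_poly_pCons F0)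

definition fixd :: "'a poly \<Rightarrow> bool" where "fixd p \<longleftrightarrow> (\<forall>i. coeff p i ^ q = coeff p i)"

lemma fixd_iff: "fixd p \<longleftrightarrow> map_poly (\<lambda>x. x ^ q) p = p"
proof
  assume "fixd p" thus "map_poly (\<lambda>x. x ^ q) p = p"
    by (intro poly_eqI) (simp add: coeff_map_poly F0 fixd_def)
next
  assume "map_poly (\<lambda>x. x ^ q) p = p"
  hence "coeff (map_poly (\<lambda>x. x ^ q) p) i = coeff p i" for i by simp
  thus "fixd p" unfolding fixd_def by (simp add: coeff_map_poly F0)
qed

lemma poly_frob: assumes "fixd p" shows "poly p ((z::'a) ^ q) = (poly p z) ^ q"
proof -
  have "(poly p z) ^ q = (\<Sum>i\<le>degree p. (coeff p i * z ^ i) ^ q)"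
    by (simp add: poly_altdef frob_sum1)
  also have "\<dots> = (\<Sum>i\<le>degree p. coeff p i * (z ^ q) ^ i)"
    using assms unfolding fixd_def
    by (intro sum.cong) (simp_all add: power_mult_distrib flip: power_mult add: mult.commute)
  finally show ?thesis by (simp add: poly_altdef)
qed

lemma factor_main:
  fixes v :: "'a poly" and lam :: 'a
  assumes lc: "lead_coeff v = 1" and irr: "irreducible_over (Fq q) v" and root: "poly v lam = 0"
  shows "degree v \<ge> 1" and "\<forall>n. poly v (lam ^ (q ^ n)) = 0"
    and "\<forall>z. poly v (z ^ q) = poly v z ^ q"
    and "\<forall>z. poly v z = (\<Prod>i=1..degree v. z - lam ^ (q ^ i))"
proof -
  have cF: "\<forall>i. coeff v i \<in> Fq q" and dg: "degree v \<ge> 1"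
    and fac: "\<And>a b. (\<forall>i. coeff a i \<in> Fq q) \<Longrightarrow> (\<forall>i. coeff b i \<in> Fq q) \<Longrightarrow> v = a * b
        \<Longrightarrow> degree a = 0 \<or> degree b = 0"
    using irr unfolding irreducible_over_def by (blast, blast, metis)
  show "degree v \<ge> 1" by (rule dg)
  have fixv: "fixd v" using cF unfolding fixd_def Fq_def by simp
  have PF: "\<forall>z. poly v (z ^ q) = poly v z ^ q" using poly_frob[OF fixv] by blast
  thus "\<forall>z. poly v (z ^ q) = poly v z ^ q" .
  define f where "f n = lam ^ (q ^ n)" for n
  have fpow: "f (a + b) = f a ^ (q ^ b)" for a b
    unfolding f_def by (simp add: power_add power_mult)
  have fS: "f (Suc n) = f n ^ q" for n using fpow[of n 1] by simp
  have roots: "poly v (f n) = 0" for n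
  proof (induction n)
    case 0 then show ?case using root by (simp add: f_def)
  next
    case (Suc n) then show ?case using PF fS qk_pos[of 1] by (simp add: power_0_left)
  qed
  thus "\<forall>n. poly v (lam ^ (q ^ n)) = 0" unfolding f_def by blast
  have v0: "v \<noteq> 0" using dg by auto
  define B where "B = f ` {1..}"
  have finB: "finite B"
  proof (rule finite_subset[OF _ poly_roots_finite[OF v0]])
    show "B \<subseteq> {x. poly v x = 0}" unfolding B_def using roots by auto
  qed
  have FB: "(\<lambda>x. x ^ q) ` B = B"
  proof (rule endo_inj_surj[OF finB])
    show "(\<lambda>x. x ^ q) ` B \<subseteq> B"
    proof (rule image_subsetI)
      fix x assume "x \<in> B"
      then obtain n where n: "n \<ge> 1" "x = f n" by (auto simp: B_def)
      have "x ^ q = f (Suc n)" using n fS[of n] by simp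
      moreover have "Suc n \<in> {1..}" by simp
      ultimately show "x ^ q \<in> B" unfolding B_def by (rule rev_image_eqI[rotated])
    qed
    show "inj_on (\<lambda>x. x ^ q) B" by (auto intro!: inj_onI frob_inj)
  qed
  have injF: "inj_on (\<lambda>x. x ^ q) B" by (auto intro!: inj_onI frob_inj)
  define g where "g = (\<Prod>x\<in>B. [:-x, 1:])"
  have "g dvd v" unfolding g_def using prod_lin_dvd[OF finB] roots B_def by auto
  then obtain h where vgh: "v = g * h" by (elim dvdE)
  have g0: "g \<noteq> 0" using v0 vgh by auto
  have gfix: "map_poly (\<lambda>x. x ^ q) g = g"
  proof -
    have "map_poly (\<lambda>x. x ^ q) g = (\<Prod>x\<in>B. [:-(x ^ q), 1:])"
      unfolding g_def by (simp add: mapF_prod mapF_lin)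
    also have "\<dots> = (\<Prod>y\<in>(\<lambda>x. x ^ q) ` B. [:-y, 1:])"
      using prod.reindex[OF injF, of "\<lambda>y. [:-y, 1:]"] by (simp add: o_def)
    also have "\<dots> = g" unfolding g_def FB ..
    finally show ?thesis .
  qed
  have vfix: "map_poly (\<lambda>x. x ^ q) v = v" using fixv fixd_iff by blast
  have "g * h = map_poly (\<lambda>x. x ^ q) (g * h)" using vfix vgh by simp
  also have "\<dots> = g * map_poly (\<lambda>x. x ^ q) h" using gfix mapF_mult[of g h] by simp
  finally have "g * h = g * map_poly (\<lambda>x. x ^ q) h" .
  hence hfix: "map_poly (\<lambda>x. x ^ q) h = h" using g0 by simp
  have gF: "\<forall>i. coeff g i \<in> Fq q" using gfix fixd_iff[of g] unfolding fixd_def Fq_def by simp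
  have hF: "\<forall>i. coeff h i \<in> Fq q" using hfix fixd_iff[of h] unfolding fixd_def Fq_def by simp
  have dgB: "degree g = card B"
    unfolding g_def by (subst degree_prod_eq_sum_degree) auto
  have "f 1 \<in> B" unfolding B_def by auto
  hence "card B \<ge> 1" using finB by (metis One_nat_def Suc_leI card_gt_0_iff empty_iff)
  hence "degree g \<noteq> 0" using dgB by simp
  hence dh: "degree h = 0" using fac[OF gF hF vgh] by simp
  have lg: "lead_coeff g = 1" unfolding g_def by (simp add: lead_coeff_prod)
  have "lead_coeff h = 1" using lc vgh lg by (simp add: lead_coeff_mult)
  hence h1: "h = 1" using dh by (metis degree_eq_zeroE lead_coeff_pCons(2) pCons_0_0 one_pCons)
  hence vg: "v = g" using vgh by simp
  define d where "d = degree v"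
  have cBd: "card B = d" using vg dgB d_def by simp
  have noteq: "f i \<noteq> f j" if ij: "1 \<le> i" "i < j" "j \<le> d" for i j
  proof
    assume eq: "f i = f j"
    have cl: "f n \<in> f ` {1..<j}" if "n \<ge> 1" for n
      using that
    proof (induction n rule: less_induct)
      case (less n)
      show ?case
      proof (cases "n < j")
        case True then show ?thesis using less.prems by auto
      next
        case False
        have "f n = f (j + (n - j))" using False by simp
        also have "\<dots> = f (i + (n - j))" using fpow eq by simp
        finally have "f n = f (i + (n - j))" .
        moreover have "f (i + (n - j)) \<in> f ` {1..<j}"
          using less.IH[of "i + (n - j)"] ij False by simp
        ultimately show ?thesis by simp
      qed
    qed
    have "B \<subseteq> f ` {1..<j}" unfolding B_def using cl by auto
    hence "card B \<le> card (f ` {1..<j})" by (simp add: card_mono)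
    also have "\<dots> \<le> card {1..<j}" by (rule card_image_le) simp
    finally show False using cBd ij by simp
  qed
  have injf: "inj_on f {1..d}"
  proof (rule inj_onI)
    fix i j assume "i \<in> {1..d}" "j \<in> {1..d}" "f i = f j"
    thus "i = j" using noteq[of i j] noteq[of j i] by (metis atLeastAtMost_iff linorder_neqE_nat)
  qed
  have fB: "f ` {1..d} = B"
  proof (rule card_subset_eq[OF finB])
    show "f ` {1..d} \<subseteq> B" unfolding B_def by auto
    show "card (f ` {1..d}) = card B" using card_image[OF injf] cBd by simp
  qed
  show "\<forall>z. poly v z = (\<Prod>i=1..degree v. z - lam ^ (q ^ i))"
  proof
    fix z
    have "poly v z = (\<Prod>x\<in>B. z - x)" using vg unfolding g_def by (simp add: poly_prod)
    also have "\<dots> = (\<Prod>i=1..d. z - f i)"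
      using prod.reindex[OF injf, of "\<lambda>x. z - x"] fB by (simp add: o_def)
    finally show "poly v z = (\<Prod>i=1..degree v. z - lam ^ (q ^ i))" unfolding f_def d_def .
  qed
qed

end




theorem lemma3p6:
  fixes N :: "'a::field \<Rightarrow> real" and \<theta> \<iota> lam :: 'a and v :: "'a poly"
    and p e q :: nat
  assumes "prime p" and "CHAR('a) = p" and "e \<ge> 1" and "q = p ^ e"
    and "nonarch_abs N" and "complete_wrt N" and "alg_closed TYPE('a)"
    and "N \<theta> = real q"
    and "\<iota> ^ (q - 1) = - \<theta>"
    and "lead_coeff v = 1" and "irreducible_over (Fq q) v"
    and "poly v lam = 0"
  shows "(- 1) ^ degree v * poly v \<theta> =
         (\<Prod>i = 1..degree v. (omega N q \<theta> \<iota> (lam ^ (q ^ i))) ^ (q - 1))"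
proof -
  have pc: "prime CHAR('a)" using assms(1,2) by simp
  have qd: "q = CHAR('a) ^ e" using assms(2,4) by simp
  note e1 = assms(3)
  note na = assms(5)
  have q2: "q \<ge> 2" by (rule q_ge2[OF pc qd e1])
  define d where "d = degree v"
  define I where "I = {1..d}"
  define f where "f i = lam ^ (q ^ i)" for i
  have finI: "finite I" and cardI: "card I = d" unfolding I_def by auto
  note FM = factor_main[OF pc qd e1 assms(10,11,12)]
  have roots: "\<And>n. poly v (f n) = 0" using FM(2) unfolding f_def by blast
  have PF: "\<And>z. poly v (z ^ q) = poly v z ^ q" using FM(3) by blast
  have fac: "\<And>z. poly v z = (\<Prod>i\<in>I. z - f i)" using FM(4) unfolding I_def d_def f_def by blast
  have v0: "v \<noteq> 0" using FM(1) by auto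
  have Nlam: "N lam \<le> 1"
  proof (rule ccontr)
    assume gt: "\<not> N lam \<le> 1"
    have "range f \<subseteq> {x. poly v x = 0}" using roots by auto
    hence "finite (range f)" using poly_roots_finite[OF v0] finite_subset by blast
    hence "\<not> inj f" using finite_imageD by blast
    then obtain i j where ij: "i \<noteq> j" "f i = f j" unfolding inj_def by blast
    hence "N lam ^ (q ^ i) = N lam ^ (q ^ j)" unfolding f_def by (simp add: na_power[OF na, symmetric])
    hence "q ^ i = q ^ j" using gt by (simp add: power_inject_exp)
    hence "i = j" using q2 by (simp add: power_inject_exp)
    thus False using ij by simp
  qed
  have Nf: "N (f i) \<le> 1" for i
    unfolding f_def using Nlam na_ge0[OF na] by (simp add: na_power[OF na] power_le_one)
  have th0: "\<theta> \<noteq> 0" using assms(8) q2 na_0[OF na] by auto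
  have Nthp: "N (\<theta> ^ k) = real q ^ k" for k using assms(8) by (simp add: na_power[OF na])
  have big: "(2::real) ^ Suc j \<le> real q ^ (q ^ j)" for j
  proof -
    have "Suc j \<le> 2 ^ j" by (rule Suc_leI[OF less_exp])
    also have "(2::nat) ^ j \<le> q ^ j" using q2 by (simp add: power_mono)
    finally have sj: "Suc j \<le> q ^ j" .
    have "(2::nat) ^ Suc j \<le> 2 ^ (q ^ j)" by (rule power_increasing[OF sj]) simp
    also have "\<dots> \<le> q ^ (q ^ j)" using q2 by (simp add: power_mono)
    finally show ?thesis by (metis numeral_power_le_of_nat_cancel_iff of_nat_power)
  qed
  have sbound: "N (f i / \<theta> ^ (q ^ j)) \<le> (1/2) ^ Suc j" for i j
  proof -
    have pos: "(0::real) < real q ^ (q ^ j)" using q2 by simp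
    have "N (f i / \<theta> ^ (q ^ j)) = N (f i) / real q ^ (q ^ j)" by (simp add: na_divide[OF na] Nthp)
    also have "\<dots> \<le> 1 / real q ^ (q ^ j)" using Nf[of i] pos by (simp add: divide_right_mono)
    also have "\<dots> \<le> 1 / 2 ^ Suc j" using big[of j] pos by (intro divide_left_mono) auto
    finally show ?thesis by (simp add: power_one_over)
  qed
  define P where "P i n = (\<Prod>j<n. inverse (1 - f i / \<theta> ^ (q ^ j)))" for i n
  have "\<forall>i. \<exists>L. conv_wrt N (P i) L"
  proof
    fix i
    show "\<exists>L. conv_wrt N (P i) L"
      unfolding P_def by (rule prod_conv_exists[OF na assms(6)]) (use sbound in blast)
  qed
  then obtain L where L: "\<And>i. conv_wrt N (P i) (L i)" by metis
  have om: "omega N q \<theta> \<iota> (f i) = \<iota> * L i" for i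
  proof -
    have "(THE L. conv_wrt N (P i) L) = L i"
      using L conv_unique[OF na] by (intro the_equality) blast+
    thus ?thesis unfolding omega_def P_def by simp
  qed
  define x0 where "x0 = poly v \<theta> / \<theta> ^ d"
  have prodz: "(\<Prod>i\<in>I. 1 - f i / z) = poly v z / z ^ d" if "z \<noteq> 0" for z
  proof -
    have "(\<Prod>i\<in>I. 1 - f i / z) = (\<Prod>i\<in>I. (z - f i) / z)"
      using that by (intro prod.cong) (auto simp: field_simps)
    also have "\<dots> = (\<Prod>i\<in>I. z - f i) / z ^ d" by (simp add: prod_dividef cardI)
    finally show ?thesis using fac by simp
  qed
  have polyq: "poly v (\<theta> ^ (q ^ j)) = poly v \<theta> ^ (q ^ j)" for j
  proof (induction j)
    case (Suc j)
    have "\<theta> ^ (q ^ Suc j) = (\<theta> ^ (q ^ j)) ^ q" by (simp only: power_Suc2 power_mult)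
    hence "poly v (\<theta> ^ (q ^ Suc j)) = (poly v \<theta> ^ (q ^ j)) ^ q" using PF Suc by simp
    thus ?case by (simp only: power_Suc2 power_mult)
  qed simp
  have K: "(\<Prod>i\<in>I. 1 - f i / \<theta> ^ (q ^ j)) = x0 ^ (q ^ j)" for j
  proof -
    have "(\<Prod>i\<in>I. 1 - f i / \<theta> ^ (q ^ j)) = poly v \<theta> ^ (q ^ j) / (\<theta> ^ (q ^ j)) ^ d"
      using prodz[of "\<theta> ^ (q ^ j)"] th0 polyq by simp
    also have "\<dots> = x0 ^ (q ^ j)" unfolding x0_def
      by (simp add: power_divide flip: power_mult add: mult.commute)
    finally show ?thesis .
  qed
  have x0p: "x0 = (\<Prod>i\<in>I. 1 - f i / \<theta>)" using K[of 0] by simp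
  have Nx1: "N (x0 - 1) \<le> 1/2"
    unfolding x0p
  proof (rule prod_near_one[OF na finI])
    show "\<forall>i\<in>I. N (f i / \<theta>) \<le> 1/2" using sbound[of _ 0] by simp
  qed auto
  have Nx0: "N x0 = 1"
    using na_ultra_eq[OF na, of "x0 - 1" 1] Nx1 na_1[OF na] by simp
  have x00: "x0 \<noteq> 0" using Nx0 na_0[OF na] by auto
  define Q where "Q n = (\<Prod>i\<in>I. P i n)" for n
  have Qe: "Q n = (\<Prod>j<n. inverse (x0 ^ (q ^ j)))" for n
  proof -
    have "Q n = (\<Prod>j<n. \<Prod>i\<in>I. inverse (1 - f i / \<theta> ^ (q ^ j)))"
      unfolding Q_def P_def by (rule prod.swap)
    also have "\<dots> = (\<Prod>j<n. inverse (\<Prod>i\<in>I. 1 - f i / \<theta> ^ (q ^ j)))"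
      using prod_inversef[of "\<lambda>i. 1 - f i / \<theta> ^ (q ^ _)" I] by (simp add: o_def)
    also have "\<dots> = (\<Prod>j<n. inverse (x0 ^ (q ^ j)))" using K by simp
    finally show ?thesis .
  qed
  have Qid: "(\<Prod>j<n. inverse (x0 ^ (q ^ j))) ^ (q - 1) * x0 ^ (q ^ n) = x0" for n
  proof (induction n)
    case (Suc n)
    define y where "y = x0 ^ (q ^ n)"
    have y0: "y \<noteq> 0" using x00 unfolding y_def by simp
    have qq: "q = Suc (q - 1)" using q2 by simp
    have "x0 ^ (q ^ Suc n) = y ^ (q - 1) * y"
      unfolding y_def by (metis power_Suc2 power_mult qq mult.commute power_Suc)
    hence "(\<Prod>j<Suc n. inverse (x0 ^ (q ^ j))) ^ (q - 1) * x0 ^ (q ^ Suc n)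
        = ((\<Prod>j<n. inverse (x0 ^ (q ^ j))) ^ (q - 1) * y) * (inverse y ^ (q - 1) * y ^ (q - 1))"
      by (simp add: y_def power_mult_distrib mult_ac)
    also have "inverse y ^ (q - 1) * y ^ (q - 1) = 1" using y0
      by (simp add: power_inverse)
    finally show ?case using Suc unfolding y_def by simp
  qed simp
  have Qq: "Q n ^ (q - 1) = x0 / x0 ^ (q ^ n)" for n
    using Qid[of n] x00 by (simp add: Qe field_simps)
  have convx: "conv_wrt N (\<lambda>n. x0 / x0 ^ (q ^ n)) x0"
    unfolding conv_wrt_def
  proof (intro allI impI)
    fix \<epsilon> :: real assume e: "\<epsilon> > 0"
    obtain M where M: "(1/2::real) ^ M < \<epsilon>" using half_pow_small[OF na e] by blast
    show "\<exists>M. \<forall>n\<ge>M. N (x0 / x0 ^ (q ^ n) - x0) < \<epsilon>"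
    proof (intro exI allI impI)
      fix n assume n: "M \<le> n"
      define w where "w = (x0 - 1) ^ (q ^ n)"
      have xw: "x0 ^ (q ^ n) = 1 + w"
        using frob_add[OF pc qd e1, of "x0 - 1" 1 n] unfolding w_def by (simp add: add.commute)
      have "n \<le> q ^ n" using less_exp[of n] power_mono[of 2 q n] q2 by linarith
      have Nw: "N w \<le> (1/2) ^ n"
      proof -
        have "N w = N (x0 - 1) ^ (q ^ n)" unfolding w_def by (simp add: na_power[OF na])
        also have "\<dots> \<le> (1/2) ^ (q ^ n)" using Nx1 na_ge0[OF na] by (simp add: power_mono)
        also have "\<dots> \<le> (1/2) ^ n" using \<open>n \<le> q ^ n\<close> by (simp add: power_decreasing)
        finally show ?thesis .
      qed
      have "(1/2::real) ^ n \<le> 1/2" if "n \<ge> 1" using that by (simp add: power_le_one power_decreasing[of 1 n "1/2::real", simplified])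
      have Nw1: "N w < 1"
      proof (cases "n = 0")
        case True
        hence "w = x0 - 1" unfolding w_def by simp
        then show ?thesis using Nx1 by simp
      next
        case False
        have "(1/2::real) ^ n \<le> 1/2" using False by (simp add: power_le_one power_decreasing[of 1 n "1/2::real", simplified])
        then show ?thesis using Nw by simp
      qed
      have N1w: "N (1 + w) = 1" using na_ultra_eq[OF na, of w 1] Nw1 na_1[OF na] by simp
      have w1: "1 + w \<noteq> 0" using N1w na_0[OF na] by auto
      have "x0 / x0 ^ (q ^ n) - x0 = - (x0 * w / (1 + w))"
        unfolding xw using w1 by (simp add: field_simps)
      hence "N (x0 / x0 ^ (q ^ n) - x0) = N w"
        by (simp add: na_minus[OF na] na_divide[OF na] na_mult[OF na] Nx0 N1w)
      also have "\<dots> \<le> (1/2) ^ M" 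
      proof -
        have "(1/2::real) ^ n \<le> (1/2) ^ M" by (rule power_decreasing[OF n]) simp_all
        thus ?thesis using Nw by linarith
      qed
      finally show "N (x0 / x0 ^ (q ^ n) - x0) < \<epsilon>" using M by simp
    qed
  qed
  have c1: "conv_wrt N (\<lambda>n. Q n ^ (q - 1)) ((\<Prod>i\<in>I. L i) ^ (q - 1))"
    unfolding Q_def using conv_power[OF na conv_prod[OF na finI]] L by blast
  have c2: "conv_wrt N (\<lambda>n. Q n ^ (q - 1)) x0" using convx Qq by simp
  have Lx: "(\<Prod>i\<in>I. L i) ^ (q - 1) = x0" using conv_unique[OF na c1 c2] .
  have "(\<Prod>i = 1..degree v. (omega N q \<theta> \<iota> (lam ^ (q ^ i))) ^ (q - 1))
      = (\<Prod>i\<in>I. (\<iota> * L i) ^ (q - 1))"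
    unfolding I_def d_def using om unfolding f_def by simp
  also have "\<dots> = (\<Prod>i\<in>I. (- \<theta>) * L i ^ (q - 1))"
    by (simp only: power_mult_distrib assms(9))
  also have "\<dots> = (- \<theta>) ^ d * (\<Prod>i\<in>I. L i) ^ (q - 1)"
    by (simp only: prod.distrib prod_constant cardI prod_power_distrib)
  also have "\<dots> = (- 1) ^ d * poly v \<theta>"
    unfolding Lx x0_def using th0 by (simp add: power_minus[of \<theta>] field_simps)
  finally show ?thesis unfolding d_def ..
qed

end
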